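(* If $G$ is a countably infinite HH-homogeneous graph satisfying property $(\dagger)$, then $G$ is HE-homogeneous.
   Context: All graphs are undirected and loopless; subgraphs are induced. A homomorphism maps adjacent vertices to adjacent vertices. $G$ is HH-homogeneous (resp. HE-homogeneous) if every homomorphism between finite induced subgraphs of $G$ is the restriction of an endomorphism (resp. a surjective endomorphism) of $G$. $G$ has property $(\dagger)$ if for every surjective homomorphism $f:A\to B$ between finite induced subgraphs $A,B$ of $G$ and every vertex $b\notin B$, there exists a vertex $a\notin A$ such that $f\cup\{(a,b)\}$ is a homomorphism from $A\cup\{a\}$ to $B\cup\{b\}$. *)

theory Defs
  imports Main "HOL-Library.Countable_Set"
begin

definition graph :: "'a set \<Rightarrow> ('a \<Rightarrow> 'a \<Rightarrow> bool) \<Rightarrow> bool" where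
  "graph V E \<longleftrightarrow> (\<forall>x y. E x y \<longrightarrow> x \<in> V \<and> y \<in> V) \<and>
     (\<forall>x y. E x y \<longrightarrow> E y x) \<and> (\<forall>x. \<not> E x x)"

text \<open>f is a homomorphism from the induced subgraph on A to the induced subgraph on B
  (only the values of f on A matter).\<close>
definition is_hom :: "('a \<Rightarrow> 'a \<Rightarrow> bool) \<Rightarrow> ('a \<Rightarrow> 'a) \<Rightarrow> 'a set \<Rightarrow> 'a set \<Rightarrow> bool" where
  "is_hom E f A B \<longleftrightarrow> f ` A \<subseteq> B \<and> (\<forall>x\<in>A. \<forall>y\<in>A. E x y \<longrightarrow> E (f x) (f y))"

definition endomorphism :: "'a set \<Rightarrow> ('a \<Rightarrow> 'a \<Rightarrow> bool) \<Rightarrow> ('a \<Rightarrow> 'a) \<Rightarrow> bool" where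
  "endomorphism V E g \<longleftrightarrow> is_hom E g V V"

definition HH_homogeneous :: "'a set \<Rightarrow> ('a \<Rightarrow> 'a \<Rightarrow> bool) \<Rightarrow> bool" where
  "HH_homogeneous V E \<longleftrightarrow>
    (\<forall>A B f. A \<subseteq> V \<and> B \<subseteq> V \<and> finite A \<and> finite B \<and> is_hom E f A B \<longrightarrow>
       (\<exists>g. endomorphism V E g \<and> (\<forall>x\<in>A. g x = f x)))"

definition HE_homogeneous :: "'a set \<Rightarrow> ('a \<Rightarrow> 'a \<Rightarrow> bool) \<Rightarrow> bool" where
  "HE_homogeneous V E \<longleftrightarrow>
    (\<forall>A B f. A \<subseteq> V \<and> B \<subseteq> V \<and> finite A \<and> finite B \<and> is_hom E f A B \<longrightarrow>
       (\<exists>g. endomorphism V E g \<and> g ` V = V \<and> (\<forall>x\<in>A. g x = f x)))"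

definition prop_dagger :: "'a set \<Rightarrow> ('a \<Rightarrow> 'a \<Rightarrow> bool) \<Rightarrow> bool" where
  "prop_dagger V E \<longleftrightarrow>
    (\<forall>A B f. A \<subseteq> V \<and> B \<subseteq> V \<and> finite A \<and> finite B \<and> is_hom E f A B \<and> f ` A = B \<longrightarrow>
       (\<forall>b \<in> V - B. \<exists>a \<in> V - A. is_hom E (f(a := b)) (insert a A) (insert b B)))"

end

theory Submission
  imports Defs
begin

definition fwd :: "'a set \<Rightarrow> ('a\<Rightarrow>'a\<Rightarrow>bool) \<Rightarrow> 'a \<Rightarrow> ('a\<Rightarrow>'a) \<times> 'a set \<Rightarrow> ('a\<Rightarrow>'a) \<times> 'a set" where
  "fwd V E v s = (if v \<in> snd s then s else
     (let g = SOME g. endomorphism V E g \<and> (\<forall>x\<in>snd s. g x = fst s x)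
      in ((fst s)(v := g v), insert v (snd s))))"

definition bwd :: "'a set \<Rightarrow> ('a\<Rightarrow>'a\<Rightarrow>bool) \<Rightarrow> 'a \<Rightarrow> ('a\<Rightarrow>'a) \<times> 'a set \<Rightarrow> ('a\<Rightarrow>'a) \<times> 'a set" where
  "bwd V E v s = (if v \<in> fst s ` snd s then s else
     (let a = SOME a. a \<in> V - snd s \<and> is_hom E ((fst s)(a := v)) (insert a (snd s)) (insert v (fst s ` snd s))
      in ((fst s)(a := v), insert a (snd s))))"

primrec sq :: "'a set \<Rightarrow> ('a\<Rightarrow>'a\<Rightarrow>bool) \<Rightarrow> (nat \<Rightarrow> 'a) \<Rightarrow> ('a\<Rightarrow>'a) \<times> 'a set \<Rightarrow> nat \<Rightarrow> ('a\<Rightarrow>'a) \<times> 'a set" where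
  "sq V E en s0 0 = s0"
| "sq V E en s0 (Suc n) = bwd V E (en n) (fwd V E (en n) (sq V E en s0 n))"

definition inv :: "'a set \<Rightarrow> ('a\<Rightarrow>'a\<Rightarrow>bool) \<Rightarrow> ('a\<Rightarrow>'a) \<times> 'a set \<Rightarrow> bool" where
  "inv V E s \<longleftrightarrow> snd s \<subseteq> V \<and> finite (snd s) \<and> fst s ` snd s \<subseteq> V \<and>
     (\<forall>x\<in>snd s. \<forall>y\<in>snd s. E x y \<longrightarrow> E (fst s x) (fst s y))"

lemma fwd_prop:
  assumes hh: "HH_homogeneous V E" and iv: "inv V E s" and v: "v \<in> V"
  shows "inv V E (fwd V E v s) \<and> v \<in> snd (fwd V E v s) \<and> snd s \<subseteq> snd (fwd V E v s)
         \<and> (\<forall>x\<in>snd s. fst (fwd V E v s) x = fst s x)"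
proof (cases "v \<in> snd s")
  case True
  then show ?thesis using iv by (simp add: fwd_def)
next
  case False
  obtain f A where s: "s = (f, A)" by fastforce
  have "\<exists>g. endomorphism V E g \<and> (\<forall>x\<in>A. g x = f x)"
    using hh iv unfolding HH_homogeneous_def inv_def is_hom_def s
    by (metis fst_conv snd_conv finite_imageI order_refl)
  then have g: "endomorphism V E (SOME g. endomorphism V E g \<and> (\<forall>x\<in>A. g x = f x)) \<and>
       (\<forall>x\<in>A. (SOME g. endomorphism V E g \<and> (\<forall>x\<in>A. g x = f x)) x = f x)"
    by (rule someI_ex)
  define g where "g = (SOME g. endomorphism V E g \<and> (\<forall>x\<in>A. g x = f x))"
  have g1: "endomorphism V E g" and g2: "\<forall>x\<in>A. g x = f x" using g g_def by auto
  have fw: "fwd V E v s = (f(v := g v), insert v A)"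
    using False by (simp add: fwd_def s g_def Let_def)
  have agree: "\<forall>x\<in>insert v A. (f(v := g v)) x = g x" using g2 by auto
  have AV: "A \<subseteq> V" using iv s by (simp add: inv_def)
  have "inv V E (f(v := g v), insert v A)"
    unfolding inv_def
  proof (intro conjI)
    show "snd (f(v := g v), insert v A) \<subseteq> V" using AV v by simp
    show "finite (snd (f(v := g v), insert v A))" using iv s by (simp add: inv_def)
    show "fst (f(v := g v), insert v A) ` snd (f(v := g v), insert v A) \<subseteq> V"
      using g1 AV v agree unfolding endomorphism_def is_hom_def
      by (smt (verit, best) fst_conv image_subset_iff insert_subset snd_conv subsetD)
    show "\<forall>x\<in>snd (f(v := g v), insert v A). \<forall>y\<in>snd (f(v := g v), insert v A). E x y \<longrightarrow>
        E (fst (f(v := g v), insert v A) x) (fst (f(v := g v), insert v A) y)"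
      using g1 AV v agree unfolding endomorphism_def is_hom_def
      by (metis fst_conv insert_subset snd_conv subsetD)
  qed
  then show ?thesis using fw False s by auto
qed

lemma bwd_prop:
  assumes dg: "prop_dagger V E" and iv: "inv V E s" and v: "v \<in> V"
  shows "inv V E (bwd V E v s) \<and> v \<in> fst (bwd V E v s) ` snd (bwd V E v s) \<and> snd s \<subseteq> snd (bwd V E v s)
         \<and> (\<forall>x\<in>snd s. fst (bwd V E v s) x = fst s x)"
proof (cases "v \<in> fst s ` snd s")
  case True
  then show ?thesis using iv by (simp add: bwd_def)
next
  case False
  obtain f A where s: "s = (f, A)" by fastforce
  have AV: "A \<subseteq> V" and fA: "finite A" and fAV: "f ` A \<subseteq> V"
    and hm: "\<forall>x\<in>A. \<forall>y\<in>A. E x y \<longrightarrow> E (f x) (f y)" using iv s by (auto simp: inv_def)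
  have "\<exists>a. a \<in> V - A \<and> is_hom E (f(a := v)) (insert a A) (insert v (f ` A))"
    using dg AV fA fAV hm False v s unfolding prop_dagger_def is_hom_def
    by (metis (no_types, lifting) Diff_iff finite_imageI fst_conv order_refl snd_conv)
  then have a: "(SOME a. a \<in> V - A \<and> is_hom E (f(a := v)) (insert a A) (insert v (f ` A))) \<in> V - A
     \<and> is_hom E (f((SOME a. a \<in> V - A \<and> is_hom E (f(a := v)) (insert a A) (insert v (f ` A))) := v))
        (insert (SOME a. a \<in> V - A \<and> is_hom E (f(a := v)) (insert a A) (insert v (f ` A))) A) (insert v (f ` A))"
    by (rule someI_ex)
  define a where "a = (SOME a. a \<in> V - A \<and> is_hom E (f(a := v)) (insert a A) (insert v (f ` A)))"
  have a1: "a \<in> V - A" and a2: "is_hom E (f(a := v)) (insert a A) (insert v (f ` A))"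
    using a a_def by auto
  have bw: "bwd V E v s = (f(a := v), insert a A)"
    using False by (simp add: bwd_def s a_def Let_def)
  have "inv V E (f(a := v), insert a A)"
    unfolding inv_def using a1 a2 AV fA fAV v unfolding is_hom_def by auto
  moreover have "\<forall>x\<in>A. (f(a := v)) x = f x" using a1 by auto
  ultimately show ?thesis using bw s by auto
qed

lemma sq_prop:
  assumes hh: "HH_homogeneous V E" and dg: "prop_dagger V E" and iv: "inv V E s0"
    and en: "\<And>n. en n \<in> V"
  shows "inv V E (sq V E en s0 n) \<and> (\<forall>m<n. en m \<in> snd (sq V E en s0 n)
      \<and> en m \<in> fst (sq V E en s0 n) ` snd (sq V E en s0 n))"
proof (induction n)
  case 0
  then show ?case using iv by simp
next
  case (Suc n)
  let ?s = "sq V E en s0 n"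
  have F: "inv V E (fwd V E (en n) ?s) \<and> en n \<in> snd (fwd V E (en n) ?s) \<and> snd ?s \<subseteq> snd (fwd V E (en n) ?s)
         \<and> (\<forall>x\<in>snd ?s. fst (fwd V E (en n) ?s) x = fst ?s x)"
    using fwd_prop[OF hh _ en] Suc by blast
  have B: "inv V E (bwd V E (en n) (fwd V E (en n) ?s)) \<and> en n \<in> fst (bwd V E (en n) (fwd V E (en n) ?s)) ` snd (bwd V E (en n) (fwd V E (en n) ?s))
     \<and> snd (fwd V E (en n) ?s) \<subseteq> snd (bwd V E (en n) (fwd V E (en n) ?s))
         \<and> (\<forall>x\<in>snd (fwd V E (en n) ?s). fst (bwd V E (en n) (fwd V E (en n) ?s)) x = fst (fwd V E (en n) ?s) x)"
    using bwd_prop[OF dg _ en] F by blast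
  show ?case
  proof (simp only: sq.simps, rule conjI)
    show "inv V E (bwd V E (en n) (fwd V E (en n) ?s))" using B by blast
  next
   show "\<forall>m<Suc n. en m \<in> snd (bwd V E (en n) (fwd V E (en n) ?s)) \<and> en m \<in> fst (bwd V E (en n) (fwd V E (en n) ?s)) ` snd (bwd V E (en n) (fwd V E (en n) ?s))"
   proof (intro allI impI)
    fix m assume "m < Suc n"
    then consider "m < n" | "m = n" by linarith
    then show "en m \<in> snd (bwd V E (en n) (fwd V E (en n) ?s)) \<and> en m \<in> fst (bwd V E (en n) (fwd V E (en n) ?s)) ` snd (bwd V E (en n) (fwd V E (en n) ?s))"
    proof cases
      case 1
      then have "en m \<in> snd ?s" "en m \<in> fst ?s ` snd ?s" using Suc by auto
      then obtain y where y: "y \<in> snd ?s" "en m = fst ?s y" by blast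
      have c1: "en m \<in> snd (bwd V E (en n) (fwd V E (en n) ?s))" using \<open>en m \<in> snd ?s\<close> F B by blast
      have "fst (bwd V E (en n) (fwd V E (en n) ?s)) y = en m" using y F B by auto
      moreover have "y \<in> snd (bwd V E (en n) (fwd V E (en n) ?s))" using y F B by blast
      ultimately have "en m \<in> fst (bwd V E (en n) (fwd V E (en n) ?s)) ` snd (bwd V E (en n) (fwd V E (en n) ?s))"
        by (metis imageI)
      then show ?thesis using c1 by blast
    next
      case 2
      then show ?thesis using F B by auto
    qed
   qed
  qed
qed

lemma sq_mono:
  assumes hh: "HH_homogeneous V E" and dg: "prop_dagger V E" and iv: "inv V E s0"
    and en: "\<And>n. en n \<in> V"
  shows "m \<le> n \<Longrightarrow> snd (sq V E en s0 m) \<subseteq> snd (sq V E en s0 n) \<and>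
     (\<forall>x\<in>snd (sq V E en s0 m). fst (sq V E en s0 n) x = fst (sq V E en s0 m) x)"
proof (induction n rule: dec_induct)
  case base
  then show ?case by simp
next
  case (step n)
  let ?s = "sq V E en s0 n"
  have I: "inv V E ?s" using sq_prop[OF hh dg iv en, where n=n] by (rule conjunct1)
  have F: "inv V E (fwd V E (en n) ?s) \<and> snd ?s \<subseteq> snd (fwd V E (en n) ?s)
         \<and> (\<forall>x\<in>snd ?s. fst (fwd V E (en n) ?s) x = fst ?s x)"
    using fwd_prop[OF hh I en] by blast
  have B: "snd (fwd V E (en n) ?s) \<subseteq> snd (bwd V E (en n) (fwd V E (en n) ?s))
         \<and> (\<forall>x\<in>snd (fwd V E (en n) ?s). fst (bwd V E (en n) (fwd V E (en n) ?s)) x = fst (fwd V E (en n) ?s) x)"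
    using bwd_prop[OF dg conjunct1[OF F] en[of n]] by blast
  have IH: "snd (sq V E en s0 m) \<subseteq> snd ?s \<and> (\<forall>x\<in>snd (sq V E en s0 m). fst ?s x = fst (sq V E en s0 m) x)"
    using step.IH .
  show ?case unfolding sq.simps
  proof (intro conjI ballI)
    show "snd (sq V E en s0 m) \<subseteq> snd (bwd V E (en n) (fwd V E (en n) ?s))" using IH F B by blast
    fix x assume x: "x \<in> snd (sq V E en s0 m)"
    then have xs: "x \<in> snd ?s" using IH by blast
    then have "x \<in> snd (fwd V E (en n) ?s)" using F by blast
    then have "fst (bwd V E (en n) (fwd V E (en n) ?s)) x = fst (fwd V E (en n) ?s) x" using B by blast
    also have "\<dots> = fst ?s x" using F xs by blast
    also have "\<dots> = fst (sq V E en s0 m) x" using IH x by blast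
    finally show "fst (bwd V E (en n) (fwd V E (en n) ?s)) x = fst (sq V E en s0 m) x" .
  qed
qed

theorem proposition4p4:
  fixes V :: "'a set" and E :: "'a \<Rightarrow> 'a \<Rightarrow> bool"
  assumes "graph V E"
    and "countable V" and "infinite V"
    and "HH_homogeneous V E"
    and "prop_dagger V E"
  shows "HE_homogeneous V E"
  unfolding HE_homogeneous_def
proof (intro allI impI)
  fix A B f
  assume H: "A \<subseteq> V \<and> B \<subseteq> V \<and> finite A \<and> finite B \<and> is_hom E f A B"
  have Vne: "V \<noteq> {}" using assms(3) by auto
  define en where "en = from_nat_into V"
  have en: "\<And>n. en n \<in> V" using Vne by (simp add: en_def from_nat_into)
  have ensurj: "\<And>v. v \<in> V \<Longrightarrow> \<exists>n. en n = v"
    unfolding en_def by (rule from_nat_into_surj[OF assms(2)])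
  have iv: "inv V E (f, A)"
  proof -
    have "f ` A \<subseteq> B" "\<forall>x\<in>A. \<forall>y\<in>A. E x y \<longrightarrow> E (f x) (f y)" using H unfolding is_hom_def by auto
    then show ?thesis using H unfolding inv_def by auto
  qed
  note hh = assms(4) and dg = assms(5)
  define S where "S = sq V E en (f, A)"
  have P: "\<And>n. inv V E (S n) \<and> (\<forall>m<n. en m \<in> snd (S n) \<and> en m \<in> fst (S n) ` snd (S n))"
    unfolding S_def by (rule sq_prop[OF hh dg iv en])
  have M: "\<And>m n. m \<le> n \<Longrightarrow> snd (S m) \<subseteq> snd (S n) \<and> (\<forall>x\<in>snd (S m). fst (S n) x = fst (S m) x)"
    unfolding S_def by (rule sq_mono[OF hh dg iv en])
  define idx where "idx v = (SOME n. en n = v)" for v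
  have idx: "en (idx v) = v" if "v \<in> V" for v
  proof -
    have "\<exists>n. en n = v" using ensurj that .
    then show ?thesis unfolding idx_def by (rule someI_ex)
  qed
  define G where "G x = fst (S (Suc (idx x))) x" for x
  have inS: "x \<in> snd (S (Suc (idx x)))" if "x \<in> V" for x
  proof -
    have "en (idx x) \<in> snd (S (Suc (idx x)))" using P[of "Suc (idx x)"] by blast
    then show ?thesis using idx[OF that] by simp
  qed
  have GS: "G x = fst (S n) x \<and> x \<in> snd (S n)" if "x \<in> V" "Suc (idx x) \<le> n" for x n
  proof -
    have m: "snd (S (Suc (idx x))) \<subseteq> snd (S n) \<and> (\<forall>y\<in>snd (S (Suc (idx x))). fst (S n) y = fst (S (Suc (idx x))) y)"
      using M[OF that(2)] .
    have "x \<in> snd (S (Suc (idx x)))" using inS[OF that(1)] .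
    then show ?thesis using m unfolding G_def by auto
  qed
  have G0: "\<And>x n. x \<in> snd (S n) \<Longrightarrow> x \<in> V \<Longrightarrow> G x = fst (S n) x"
  proof -
    fix x n assume xn: "x \<in> snd (S n)" and xV: "x \<in> V"
    let ?N = "max n (Suc (idx x))"
    have "G x = fst (S ?N) x" using GS[OF xV] by simp
    also have "\<dots> = fst (S n) x" using M[of n ?N] xn by simp
    finally show "G x = fst (S n) x" .
  qed
  show "\<exists>g. endomorphism V E g \<and> g ` V = V \<and> (\<forall>x\<in>A. g x = f x)"
  proof (intro exI conjI)
    show "endomorphism V E G" unfolding endomorphism_def is_hom_def
    proof (intro conjI ballI impI)
      show "G ` V \<subseteq> V"
      proof
        fix y assume "y \<in> G ` V"
        then obtain x where x: "x \<in> V" "y = G x" by blast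
        have "G x = fst (S (Suc (idx x))) x" by (simp add: G_def)
        then show "y \<in> V" using P[of "Suc (idx x)"] inS[OF x(1)] x unfolding inv_def by blast
      qed
      fix x y assume xV: "x \<in> V" and yV: "y \<in> V" and e: "E x y"
      let ?N = "max (Suc (idx x)) (Suc (idx y))"
      have "G x = fst (S ?N) x \<and> x \<in> snd (S ?N)" using GS[OF xV] by simp
      moreover have "G y = fst (S ?N) y \<and> y \<in> snd (S ?N)" using GS[OF yV] by simp
      moreover have "\<forall>x\<in>snd (S ?N). \<forall>y\<in>snd (S ?N). E x y \<longrightarrow> E (fst (S ?N) x) (fst (S ?N) y)"
        using P[of ?N] unfolding inv_def by blast
      ultimately show "E (G x) (G y)" using e by simp
    qed
    show "G ` V = V"
    proof
      show "G ` V \<subseteq> V"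
      proof
        fix y assume "y \<in> G ` V"
        then obtain x where x: "x \<in> V" "y = G x" by blast
        have "G x = fst (S (Suc (idx x))) x" by (simp add: G_def)
        then show "y \<in> V" using P[of "Suc (idx x)"] inS[OF x(1)] x unfolding inv_def by blast
      qed
      show "V \<subseteq> G ` V"
      proof
        fix v assume vV: "v \<in> V"
        have "en (idx v) \<in> fst (S (Suc (idx v))) ` snd (S (Suc (idx v)))" using P[of "Suc (idx v)"] by blast
        then obtain a where a: "a \<in> snd (S (Suc (idx v)))" "v = fst (S (Suc (idx v))) a"
          using idx[OF vV] by auto
        have aV: "a \<in> V" using a P[of "Suc (idx v)"] unfolding inv_def by blast
        have "G a = v" using G0[OF a(1) aV] a(2) by simp
        then show "v \<in> G ` V" using aV by blast
      qed
    qed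
    show "\<forall>x\<in>A. G x = f x"
    proof
      fix x assume xA: "x \<in> A"
      have "x \<in> snd (S 0)" using xA by (simp add: S_def)
      then have "G x = fst (S 0) x" using G0 H xA by blast
      then show "G x = f x" by (simp add: S_def)
    qed
  qed
qed

end
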